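(* Assume $\mathrm{char}(\mathbb{F})=p>0$, let $0\neq h\in\mathbb{F}[x]$, and regard $A_h\subseteq A_1$ via $x\mapsto x$, $\hat y\mapsto yh$. Then $A_h$ is a free module over its center $Z(A_h)=\mathbb{F}[x^p,h^py^p]$, with basis $\{x^ih^jy^j: 0\le i,j<p\}$.
   Context: For $h\in\mathbb{F}[x]$, $A_h$ is the unital associative $\mathbb{F}$-algebra generated by $x,\hat y$ with defining relation $\hat yx-x\hat y=h$. $A_1$ is the Weyl algebra, generated by $x,y$ with $yx-xy=1$; for $h\ne0$, $x\mapsto x,\ \hat y\mapsto yh$ embeds $A_h$ into $A_1$, and for each $j\ge0$ the element $h^jy^j\in A_1$ lies in $A_h$. *)

theory Defs
  imports "HOL-Computational_Algebra.Polynomial"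
begin

text \<open>The Weyl algebra A_1 over a field F (generated by x, y with yx - xy = 1) is
represented by normal forms: an element sum_{i,j} c_{ij} x^j y^i is the polynomial in y
(outer variable) with coefficients in F[x] (inner variable), i.e. the coefficient of y^i
is placed to the LEFT of y^i. Multiplication uses y^i f = sum_k (i choose k) f^(k) y^(i-k).\<close>

definition weyl_mult :: "'a::field poly poly \<Rightarrow> 'a poly poly \<Rightarrow> 'a poly poly" where
  "weyl_mult P Q =
     (\<Sum>i\<le>degree P. \<Sum>j\<le>degree Q. \<Sum>k\<le>i.
        monom (of_nat (i choose k) * coeff P i * (pderiv ^^ k) (coeff Q j)) (i - k + j))"

definition weyl_x :: "'a::field poly poly" where
  "weyl_x = [:[:0, 1:]:]"

definition weyl_y :: "'a::field poly poly" where
  "weyl_y = monom 1 1"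

definition weyl_const :: "'a::field poly \<Rightarrow> 'a poly poly" where
  "weyl_const f = [:f:]"

inductive_set weyl_subalg :: "'a::field poly poly set \<Rightarrow> 'a poly poly set"
  for S :: "'a poly poly set" where
  scalar: "[:[:c:]:] \<in> weyl_subalg S"
| gen: "s \<in> S \<Longrightarrow> s \<in> weyl_subalg S"
| add: "a \<in> weyl_subalg S \<Longrightarrow> b \<in> weyl_subalg S \<Longrightarrow> a + b \<in> weyl_subalg S"
| mult: "a \<in> weyl_subalg S \<Longrightarrow> b \<in> weyl_subalg S \<Longrightarrow> weyl_mult a b \<in> weyl_subalg S"

definition A_h :: "'a::field poly \<Rightarrow> 'a poly poly set" where
  "A_h h = weyl_subalg {weyl_x, weyl_mult weyl_y (weyl_const h)}"

definition weyl_center :: "'a::field poly poly set \<Rightarrow> 'a poly poly set" where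
  "weyl_center B = {z \<in> B. \<forall>b\<in>B. weyl_mult z b = weyl_mult b z}"

definition weyl_pow :: "'a::field poly poly \<Rightarrow> nat \<Rightarrow> 'a poly poly" where
  "weyl_pow a n = (weyl_mult a ^^ n) 1"

end

theory Submission
  imports Defs "HOL-Computational_Algebra.Euclidean_Algorithm"
begin


definition wsum :: "nat \<Rightarrow> nat \<Rightarrow> 'a::field poly poly \<Rightarrow> 'a poly poly \<Rightarrow> 'a poly poly" where
  "wsum N M P Q = (\<Sum>i\<le>N. \<Sum>j\<le>M. \<Sum>k\<le>i.
        monom (of_nat (i choose k) * coeff P i * (pderiv ^^ k) (coeff Q j)) (i - k + j))"

lemma funpow_pderiv_0 [simp]: "(pderiv ^^ k) 0 = 0"
  by (induction k) auto

lemma weyl_mult_wsum: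
  fixes P Q :: "'a::field poly poly"
  assumes "degree P \<le> N" "degree Q \<le> M"
  shows "weyl_mult P Q = wsum N M P Q"
proof -
  let ?F = "\<lambda>i j. \<Sum>k\<le>i. monom (of_nat (i choose k) * coeff P i * (pderiv ^^ k) (coeff Q j)) (i - k + j)"
  have inner: "(\<Sum>j\<le>M. ?F i j) = (\<Sum>j\<le>degree Q. ?F i j)" for i
    by (rule sum.mono_neutral_right) (use assms in \<open>auto simp: coeff_eq_0\<close>)
  have outer: "(\<Sum>i\<le>N. \<Sum>j\<le>degree Q. ?F i j) = (\<Sum>i\<le>degree P. \<Sum>j\<le>degree Q. ?F i j)"
    by (rule sum.mono_neutral_right) (use assms in \<open>auto simp: coeff_eq_0\<close>)
  show ?thesis unfolding weyl_mult_def wsum_def inner outer ..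
qed

lemma wsum_add_left: "wsum N M (P1 + P2) Q = wsum N M P1 Q + wsum N M P2 Q"
  by (simp add: wsum_def distrib_left distrib_right add_monom[symmetric] sum.distrib)

lemma wsum_add_right: "wsum N M P (Q1 + Q2) = wsum N M P Q1 + wsum N M P Q2"
  unfolding wsum_def
  by (simp add: distrib_left distrib_right add_monom[symmetric] sum.distrib higher_pderiv_add)


lemma wm_add_left: "weyl_mult (P1 + P2) Q = weyl_mult P1 Q + weyl_mult P2 Q"
proof -
  let ?N = "max (degree P1) (degree P2)"
  have "degree (P1 + P2) \<le> ?N" by (rule degree_add_le_max)
  then show ?thesis
    by (simp add: weyl_mult_wsum[where N="?N" and M="degree Q"] wsum_add_left)
qed

lemma wm_add_right: "weyl_mult P (Q1 + Q2) = weyl_mult P Q1 + weyl_mult P Q2"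
proof -
  let ?M = "max (degree Q1) (degree Q2)"
  have "degree (Q1 + Q2) \<le> ?M" by (rule degree_add_le_max)
  then show ?thesis
    by (simp add: weyl_mult_wsum[where M="?M" and N="degree P"] wsum_add_right)
qed

lemma wm_0_left [simp]: "weyl_mult 0 Q = 0"
  by (simp add: weyl_mult_def)

lemma wm_0_right [simp]: "weyl_mult P 0 = 0"
  by (simp add: weyl_mult_def)

lemma wm_sum_left: "weyl_mult (\<Sum>x\<in>A. f x) Q = (\<Sum>x\<in>A. weyl_mult (f x) Q)"
  by (induction A rule: infinite_finite_induct) (simp_all add: wm_add_left)

lemma wm_sum_right: "weyl_mult P (\<Sum>x\<in>A. f x) = (\<Sum>x\<in>A. weyl_mult P (f x))"
  by (induction A rule: infinite_finite_induct) (simp_all add: wm_add_right)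

lemma sum_atMost_only_last:
  fixes n :: nat
  assumes "\<And>m. m < n \<Longrightarrow> F m = 0"
  shows "sum F {..n} = F n"
proof -
  have "sum F {..n} = sum F {n}"
  proof (rule sum.mono_neutral_right)
    show "\<forall>i\<in>{..n} - {n}. F i = 0"
    proof
      fix i assume "i \<in> {..n} - {n}"
      then have "i < n" by auto
      then show "F i = 0" by (rule assms)
    qed
  qed auto
  then show ?thesis by simp
qed

lemma smult_sum_right: "smult c (\<Sum>x\<in>A. f x) = (\<Sum>x\<in>A. smult c (f x))"
  by (induction A rule: infinite_finite_induct) (simp_all add: smult_add_right)

lemma wm_monom:
  "weyl_mult (monom f i) (monom g j) =
     (\<Sum>k\<le>i. monom (of_nat (i choose k) * f * (pderiv ^^ k) g) (i - k + j))"
proof -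
  have "weyl_mult (monom f i) (monom g j) = wsum i j (monom f i) (monom g j)"
    by (rule weyl_mult_wsum) (simp_all add: degree_monom_le)
  also have "\<dots> = (\<Sum>k\<le>i. monom (of_nat (i choose k) * f * (pderiv ^^ k) g) (i - k + j))"
    unfolding wsum_def
    by (subst sum_atMost_only_last, simp add: coeff_monom,
        subst sum_atMost_only_last, auto simp: coeff_monom)
  finally show ?thesis .
qed

lemma wm_const: "weyl_mult [:f:] Q = smult f Q"
proof -
  have "weyl_mult [:f:] Q = wsum 0 (degree Q) [:f:] Q"
    by (rule weyl_mult_wsum) simp_all
  also have "\<dots> = (\<Sum>j\<le>degree Q. smult f (monom (coeff Q j) j))"
    by (simp add: wsum_def smult_monom)
  also have "\<dots> = smult f Q"
    by (simp add: smult_sum_right [symmetric] poly_as_sum_of_monoms)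
  finally show ?thesis .
qed

lemma poly_mult_monoms:
  "P * Q = (\<Sum>i\<le>degree P. \<Sum>j\<le>degree Q. monom (coeff P i * coeff Q j) (i + j))"
proof -
  have "P * Q = (\<Sum>i\<le>degree P. monom (coeff P i) i) * (\<Sum>j\<le>degree Q. monom (coeff Q j) j)"
    by (simp add: poly_as_sum_of_monoms)
  also have "\<dots> = (\<Sum>i\<le>degree P. \<Sum>j\<le>degree Q. monom (coeff P i * coeff Q j) (i + j))"
    unfolding sum_product by (simp add: mult_monom)
  finally show ?thesis .
qed

lemma wm_eq_mult_if:
  assumes "\<And>i j k. k \<in> {1..i} \<Longrightarrow> of_nat (i choose k) * coeff P i * (pderiv ^^ k) (coeff Q j) = 0"
  shows "weyl_mult P Q = P * Q"
proof -
  have "(\<Sum>k\<le>i. monom (of_nat (i choose k) * coeff P i * (pderiv ^^ k) (coeff Q j)) (i - k + j))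
        = monom (coeff P i * coeff Q j) (i + j)" for i j
  proof -
    have "(\<Sum>k\<le>i. monom (of_nat (i choose k) * coeff P i * (pderiv ^^ k) (coeff Q j)) (i - k + j))
       = (\<Sum>k\<in>{0}. monom (of_nat (i choose k) * coeff P i * (pderiv ^^ k) (coeff Q j)) (i - k + j))"
    proof (rule sum.mono_neutral_right)
      show "\<forall>k\<in>{..i} - {0}. monom (of_nat (i choose k) * coeff P i * (pderiv ^^ k) (coeff Q j)) (i - k + j) = 0"
      proof
        fix k assume "k \<in> {..i} - {0}"
        then have "k \<in> {1..i}" by auto
        from assms[OF this, of j] show "monom (of_nat (i choose k) * coeff P i * (pderiv ^^ k) (coeff Q j)) (i - k + j) = 0" by simp
      qed
    qed auto
    then show ?thesis by simp
  qed
  then show ?thesis unfolding weyl_mult_def poly_mult_monoms[of P Q] by (intro sum.cong refl) simp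
qed


lemma char_prime: "CHAR('a::field) = p \<Longrightarrow> p > 0 \<Longrightarrow> prime p"
  using prime_CHAR_semidom[where 'a='a] by simp

lemma of_nat_poly_eq_0: "(of_nat n :: 'a::field poly) = 0 \<longleftrightarrow> CHAR('a) dvd n"
  by (simp add: of_nat_eq_0_iff_char_dvd)

lemma dvd_shift_mod: "(p::nat) > 0 \<Longrightarrow> p dvd (m + (p - m mod p) mod p)"
proof -
  assume p: "p > 0"
  define q r where "q = m div p" and "r = m mod p"
  have m: "m = p * q + r" unfolding q_def r_def by simp
  have r: "r < p" unfolding r_def using p by simp
  show ?thesis
  proof (cases "r = 0")
    case True
    then show ?thesis using m by (simp add: r_def[symmetric])
  next
    case False
    then have "(p - r) mod p = p - r" using r by simp
    then have "m + (p - m mod p) mod p = p * (q + 1)" using m r by (simp add: r_def[symmetric])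
    then show ?thesis by simp
  qed
qed

lemma higher_pderiv_vanish:
  fixes g :: "'a::field poly"
  assumes "CHAR('a) = p" "p > 0" "k \<ge> p"
  shows "(pderiv ^^ k) g = 0"
proof (rule poly_eqI)
  fix n
  define i0 where "i0 = (p - Suc n mod p) mod p"
  have i0: "i0 < k" using assms unfolding i0_def
    by (meson less_le_trans mod_less_divisor)
  have "p dvd Suc n + i0" unfolding i0_def by (rule dvd_shift_mod) (use assms in auto)
  also have "Suc n + i0 dvd (\<Prod>i=0..<k. Suc n + i)"
    using i0 by (intro dvd_prodI) auto
  also have "(\<Prod>i=0..<k. Suc n + i) = pochhammer (Suc n) k"
    by (simp add: pochhammer_prod)
  finally have "(of_nat (pochhammer (Suc n) k) :: 'a) = 0"
    using assms by (simp add: of_nat_eq_0_iff_char_dvd)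
  then have "pochhammer (of_nat (Suc n) :: 'a) k = 0"
    by (simp only: pochhammer_of_nat)
  then show "coeff ((pderiv ^^ k) g) n = coeff 0 n"
    by (simp only: coeff_higher_pderiv) simp
qed

lemma prime_dvd_binomial:
  assumes "prime p" "p dvd i" "\<not> p dvd k" "0 < k"
  shows "p dvd (i choose k)"
proof -
  have "k * (i choose k) = i * ((i - 1) choose (k - 1))"
    using assms(4) by (rule times_binomial_minus1_eq)
  then have "p dvd k * (i choose k)" using assms(2) by simp
  then show ?thesis using assms(1,3) prime_dvd_mult_iff by blast
qed

lemma wm_eq_mult_R:
  fixes P Q :: "'a::field poly poly"
  assumes "CHAR('a) = p" "p > 0" "\<And>i. \<not> p dvd i \<Longrightarrow> coeff P i = 0"
  shows "weyl_mult P Q = P * Q"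
proof (rule wm_eq_mult_if)
  fix i j k :: nat assume k: "k \<in> {1..i}"
  show "of_nat (i choose k) * coeff P i * (pderiv ^^ k) (coeff Q j) = 0"
  proof (cases "coeff P i = 0")
    case False
    then have pi: "p dvd i" using assms(3) by blast
    show ?thesis
    proof (cases "p dvd k")
      case True
      then have "k \<ge> p" using k by (auto dest: dvd_imp_le)
      then show ?thesis using higher_pderiv_vanish[OF assms(1,2)] by simp
    next
      case False
      then have "p dvd (i choose k)"
        using prime_dvd_binomial[OF char_prime[OF assms(1,2)] pi] k by auto
      then have "(of_nat (i choose k) :: 'a poly) = 0"
        using assms(1) by (simp add: of_nat_poly_eq_0)
      then show ?thesis by simp
    qed
  qed simp
qed

lemma wm_eq_mult_L:
  fixes P Q :: "'a::field poly poly"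
  assumes "\<And>j. pderiv (coeff Q j) = 0"
  shows "weyl_mult P Q = P * Q"
proof (rule wm_eq_mult_if)
  fix i j k :: nat assume k: "k \<in> {1..i}"
  then obtain k' where "k = Suc k'" by (cases k) auto
  then have "(pderiv ^^ k) (coeff Q j) = 0"
    by (simp only: funpow_Suc_right o_apply assms higher_pderiv_0)
  then show "of_nat (i choose k) * coeff P i * (pderiv ^^ k) (coeff Q j) = 0" by simp
qed


definition Sset :: "'a::field poly \<Rightarrow> 'a poly poly set" where
  "Sset h = {P. \<forall>j. h ^ j dvd coeff P j}"

lemma Sset_add: "P \<in> Sset h \<Longrightarrow> Q \<in> Sset h \<Longrightarrow> P + Q \<in> Sset h"
  by (simp add: Sset_def)

lemma Sset_0: "0 \<in> Sset h"
  by (simp add: Sset_def)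

lemma Sset_sum: "(\<And>x. x \<in> A \<Longrightarrow> f x \<in> Sset h) \<Longrightarrow> (\<Sum>x\<in>A. f x) \<in> Sset h"
  by (induction A rule: infinite_finite_induct) (simp_all add: Sset_0 Sset_add)

lemma Sset_monom: "monom g n \<in> Sset h \<longleftrightarrow> h ^ n dvd g"
  by (auto simp: Sset_def coeff_monom)

lemma pderiv_dvd_pow: "h ^ m dvd u \<Longrightarrow> h ^ (m - 1) dvd pderiv (u :: 'a::field poly)"
proof -
  assume "h ^ m dvd u"
  then obtain v where u: "u = h ^ m * v" by (auto elim: dvdE)
  show ?thesis
  proof (cases m)
    case 0 then show ?thesis by simp
  next
    case (Suc m')
    have eq: "pderiv u = h ^ Suc m' * pderiv v + v * (smult (of_nat (Suc m')) (h ^ m') * pderiv h)"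
      unfolding u Suc by (simp only: pderiv_mult pderiv_power_Suc)
    have "h ^ m' dvd h ^ Suc m' * pderiv v"
      by (intro dvd_mult2 le_imp_power_dvd) simp
    moreover have "h ^ m' dvd v * (smult (of_nat (Suc m')) (h ^ m') * pderiv h)"
      by (intro dvd_mult dvd_mult2 dvd_smult dvd_refl)
    ultimately show ?thesis unfolding eq using Suc by simp
  qed
qed

lemma higher_pderiv_dvd_pow: "h ^ m dvd u \<Longrightarrow> h ^ (m - k) dvd (pderiv ^^ k) (u :: 'a::field poly)"
proof (induction k)
  case 0 then show ?case by simp
next
  case (Suc k)
  have "h ^ (m - k - 1) dvd pderiv ((pderiv ^^ k) u)"
    by (rule pderiv_dvd_pow) (use Suc in simp)
  then show ?case by simp
qed

lemma Sset_mult: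
  assumes "P \<in> Sset h" "Q \<in> Sset h"
  shows "weyl_mult P Q \<in> Sset h"
  unfolding weyl_mult_def
proof (intro Sset_sum)
  fix i j k :: nat assume k: "k \<in> {..i}"
  have "h ^ i dvd coeff P i" using assms(1) by (simp add: Sset_def)
  moreover have "h ^ (j - k) dvd (pderiv ^^ k) (coeff Q j)"
    by (rule higher_pderiv_dvd_pow) (use assms(2) in \<open>simp add: Sset_def\<close>)
  ultimately have "h ^ i * h ^ (j - k) dvd coeff P i * (pderiv ^^ k) (coeff Q j)"
    by (rule mult_dvd_mono)
  moreover have "h ^ (i - k + j) dvd h ^ i * h ^ (j - k)"
    unfolding power_add[symmetric] by (rule le_imp_power_dvd) (use k in auto)
  ultimately have "h ^ (i - k + j) dvd of_nat (i choose k) * coeff P i * (pderiv ^^ k) (coeff Q j)"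
    by (metis (no_types, lifting) dvd_mult dvd_trans mult.assoc)
  then show "monom (of_nat (i choose k) * coeff P i * (pderiv ^^ k) (coeff Q j)) (i - k + j) \<in> Sset h"
    by (simp add: Sset_monom)
qed

lemma yhat_eq: "weyl_mult weyl_y (weyl_const h) = monom h 1 + monom (pderiv h) 0"
  unfolding weyl_y_def weyl_const_def monom_0[symmetric] wm_monom
  by (simp add: atMost_Suc)

lemma A_h_sub_Sset: "A_h h \<subseteq> Sset h"
proof
  fix a assume "a \<in> A_h h"
  then show "a \<in> Sset h" unfolding A_h_def
  proof (induction rule: weyl_subalg.induct)
    case (scalar c) then show ?case by (auto simp: Sset_def coeff_pCons split: nat.splits)
  next
    case (gen s) then show ?case
      by (auto simp: yhat_eq Sset_add Sset_monom weyl_x_def Sset_def coeff_pCons split: nat.splits)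
  next
    case (add a b) then show ?case by (blast intro: Sset_add)
  next
    case (mult a b) then show ?case by (blast intro: Sset_mult)
  qed
qed


lemma subalg_0: "0 \<in> weyl_subalg S"
  using weyl_subalg.scalar[of 0 S] by simp

lemma subalg_sum: "(\<And>x. x \<in> A \<Longrightarrow> f x \<in> weyl_subalg S) \<Longrightarrow> (\<Sum>x\<in>A. f x) \<in> weyl_subalg S"
  by (induction A rule: infinite_finite_induct) (simp_all add: subalg_0 weyl_subalg.add)

lemma subalg_const:
  assumes "weyl_x \<in> S"
  shows "[:f:] \<in> weyl_subalg S"
proof (induction f rule: pCons_induct)
  case 0 then show ?case by (simp add: subalg_0)
next
  case (pCons a f)
  have "weyl_mult weyl_x [:f:] = [:[:0,1:] * f:]"
    by (simp add: weyl_x_def wm_const)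
  moreover have "[:pCons a f:] = [:[:a:]:] + [:[:0,1:] * f:]"
    by simp
  moreover have "weyl_mult weyl_x [:f:] \<in> weyl_subalg S"
    using assms pCons.IH by (blast intro: weyl_subalg.mult weyl_subalg.gen)
  ultimately show ?case by (metis weyl_subalg.add weyl_subalg.scalar)
qed

lemma A_h_const: "[:f:] \<in> A_h h"
  unfolding A_h_def by (rule subalg_const) simp

lemma A_h_yhat: "monom h 1 + monom (pderiv h) 0 \<in> A_h h"
  unfolding A_h_def yhat_eq[symmetric] by (rule weyl_subalg.gen) simp

lemma A_h_monom_pow: "monom (h ^ j) j \<in> A_h h"
proof (induction j)
  case 0 then show ?case using A_h_const[of 1 h] by (simp add: monom_0)
next
  case (Suc j)
  let ?M = "monom (h ^ j) j"
  let ?f = "smult (of_nat (Suc j)) (pderiv h)"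
  have e1: "weyl_mult (monom h 1 + monom (pderiv h) 0) ?M
      = monom (h ^ Suc j) (Suc j) + monom (pderiv (h ^ Suc j)) j"
    by (simp add: wm_add_left wm_monom atMost_Suc pderiv_mult add_monom algebra_simps)
  have pd: "pderiv (h ^ Suc j) = smult (of_nat (Suc j)) (h ^ j) * pderiv h"
    by (rule pderiv_power_Suc)
  have e2: "weyl_mult [:- ?f:] ?M = - monom (pderiv (h ^ Suc j)) j"
    unfolding pd minus_monom wm_const smult_monom by (simp add: algebra_simps)
  have "monom (h ^ Suc j) (Suc j) = weyl_mult (monom h 1 + monom (pderiv h) 0) ?M + weyl_mult [:- ?f:] ?M"
    unfolding e1 e2 by simp
  moreover have "weyl_mult (monom h 1 + monom (pderiv h) 0) ?M \<in> A_h h"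
    using A_h_yhat Suc.IH unfolding A_h_def by (rule weyl_subalg.mult)
  moreover have "weyl_mult [:- ?f:] ?M \<in> A_h h"
    using A_h_const Suc.IH unfolding A_h_def by (rule weyl_subalg.mult)
  ultimately show ?case unfolding A_h_def by (metis weyl_subalg.add)
qed

lemma Sset_sub_A_h: "Sset h \<subseteq> A_h h"
proof
  fix P assume P: "P \<in> Sset h"
  have "(\<Sum>n\<le>degree P. monom (coeff P n) n) \<in> A_h h"
    unfolding A_h_def
  proof (rule subalg_sum)
    fix n
    from P obtain f where f: "coeff P n = h ^ n * f" by (auto simp: Sset_def elim: dvdE)
    have "monom (coeff P n) n = weyl_mult [:f:] (monom (h ^ n) n)"
      by (simp add: wm_const smult_monom f mult.commute)
    also have "\<dots> \<in> A_h h"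
      using A_h_const A_h_monom_pow unfolding A_h_def by (rule weyl_subalg.mult)
    finally show "monom (coeff P n) n \<in> weyl_subalg {weyl_x, weyl_mult weyl_y (weyl_const h)}"
      unfolding A_h_def .
  qed
  then show "P \<in> A_h h" by (simp add: poly_as_sum_of_monoms)
qed

lemma A_h_eq: "A_h h = Sset h"
  using A_h_sub_Sset Sset_sub_A_h by blast


lemma pderiv_sum': "pderiv (\<Sum>x\<in>A. f x) = (\<Sum>x\<in>A. pderiv (f x))"
  by (induction A rule: infinite_finite_induct) (simp_all add: pderiv_add)

lemma sum_only_one:
  assumes "finite A" "a \<in> A" "\<And>k. k \<in> A \<Longrightarrow> k \<noteq> a \<Longrightarrow> F k = 0"
  shows "sum F A = F a"
proof -
  have "sum F A = sum F {a}"
  proof (rule sum.mono_neutral_right)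
    show "\<forall>i\<in>A - {a}. F i = 0" using assms(3) by blast
  qed (use assms in auto)
  then show ?thesis by simp
qed

lemma higher_pderiv_X: "(pderiv ^^ k) [:0, 1::'a::field:] = (if k = 0 then [:0,1:] else if k = 1 then 1 else 0)"
proof (cases k)
  case (Suc k')
  then show ?thesis
    by (cases k') (simp_all del: funpow.simps add: funpow_Suc_right pderiv_pCons)
qed simp

lemma wm_monom_x: "weyl_mult (monom c i) [:[:0,1::'a::field:]:] =
   smult [:0,1:] (monom c i) + pderiv (monom c i)"
proof (cases i)
  case 0
  then show ?thesis unfolding monom_0[symmetric] wm_monom by (simp add: pderiv_monom smult_monom mult.commute)
next
  case (Suc i')
  have "weyl_mult (monom c i) [:[:0,1::'a::field:]:] =
     (\<Sum>k\<le>i. monom (of_nat (i choose k) * c * (pderiv ^^ k) [:0,1:]) (i - k))"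
    unfolding monom_0[symmetric] wm_monom by simp
  also have "\<dots> = (\<Sum>k\<in>{0,1}. monom (of_nat (i choose k) * c * (pderiv ^^ k) [:0,1:]) (i - k))"
    by (rule sum.mono_neutral_right) (auto simp: higher_pderiv_X Suc)
  also have "\<dots> = smult [:0,1:] (monom c i) + pderiv (monom c i)"
    by (simp add: higher_pderiv_X pderiv_monom smult_monom Suc mult.commute)
  finally show ?thesis .
qed

lemma wm_x_right: "weyl_mult P [:[:0,1::'a::field:]:] = smult [:0,1:] P + pderiv P"
proof -
  have "weyl_mult P [:[:0,1::'a::field:]:]
     = weyl_mult (\<Sum>i\<le>degree P. monom (coeff P i) i) [:[:0,1:]:]"
    by (simp add: poly_as_sum_of_monoms)
  also have "\<dots> = (\<Sum>i\<le>degree P. smult [:0,1:] (monom (coeff P i) i) + pderiv (monom (coeff P i) i))"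
    by (simp add: wm_sum_left wm_monom_x)
  also have "\<dots> = smult [:0,1:] (\<Sum>i\<le>degree P. monom (coeff P i) i) + pderiv (\<Sum>i\<le>degree P. monom (coeff P i) i)"
    by (simp add: sum.distrib smult_sum_right pderiv_sum')
  finally show ?thesis by (simp add: poly_as_sum_of_monoms)
qed

lemma wm_yhat_left: "weyl_mult (monom h 1 + monom (pderiv h) 0) Q =
   Q * (monom h 1 + monom (pderiv h) 0) + (\<Sum>j\<le>degree Q. monom (h * pderiv (coeff Q j)) j)"
proof -
  have "weyl_mult (monom h 1) Q = weyl_mult (monom h 1) (\<Sum>j\<le>degree Q. monom (coeff Q j) j)"
    by (simp add: poly_as_sum_of_monoms)
  also have "\<dots> = (\<Sum>j\<le>degree Q. monom (h * coeff Q j) (Suc j) + monom (h * pderiv (coeff Q j)) j)"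
    by (simp add: wm_sum_right wm_monom atMost_Suc add.commute)
  also have "\<dots> = (\<Sum>j\<le>degree Q. monom (coeff Q j) j) * monom h 1 + (\<Sum>j\<le>degree Q. monom (h * pderiv (coeff Q j)) j)"
    by (simp add: sum.distrib sum_distrib_right mult_monom mult.commute[of h])
  finally have 1: "weyl_mult (monom h 1) Q = Q * monom h 1 + (\<Sum>j\<le>degree Q. monom (h * pderiv (coeff Q j)) j)"
    by (simp add: poly_as_sum_of_monoms)
  have 2: "weyl_mult (monom (pderiv h) 0) Q = Q * monom (pderiv h) 0"
    by (simp add: monom_0 wm_const)
  show ?thesis unfolding wm_add_left 1 2 by (simp add: algebra_simps)
qed

lemma coeff_sum_monoms: "coeff (\<Sum>j\<le>M. monom (a j) j) n = (if n \<le> M then a n else 0)"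
  by (simp add: coeff_sum)


definition Tp :: "nat \<Rightarrow> 'a::field poly poly set" where
  "Tp p = {P. \<forall>j. pderiv (coeff P j) = 0 \<and> (\<not> p dvd j \<longrightarrow> coeff P j = 0)}"

lemma Tp_mult_eq:
  fixes P Q :: "'a::field poly poly"
  assumes "CHAR('a) = p" "p > 0" "P \<in> Tp p"
  shows "weyl_mult P Q = P * Q" "weyl_mult Q P = P * Q"
proof -
  show "weyl_mult P Q = P * Q"
    by (rule wm_eq_mult_R[OF assms(1,2)]) (use assms(3) in \<open>auto simp: Tp_def\<close>)
  show "weyl_mult Q P = P * Q"
    by (subst mult.commute, rule wm_eq_mult_L) (use assms(3) in \<open>auto simp: Tp_def\<close>)
qed

lemma center_eq:
  fixes h :: "'a::field poly"
  assumes "CHAR('a) = p" "p > 0" "h \<noteq> 0"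
  shows "weyl_center (A_h h) = Sset h \<inter> Tp p"
proof
  show "weyl_center (A_h h) \<subseteq> Sset h \<inter> Tp p"
  proof
    fix z assume "z \<in> weyl_center (A_h h)"
    then have zS: "z \<in> Sset h" and comm: "\<And>b. b \<in> Sset h \<Longrightarrow> weyl_mult z b = weyl_mult b z"
      by (auto simp: weyl_center_def A_h_eq)
    have "[:[:0,1:]:] \<in> Sset h" using A_h_const[of "[:0,1:]" h] by (simp add: A_h_eq)
    from comm[OF this] have "smult [:0,1:] z + pderiv z = smult [:0,1:] z"
      by (simp add: wm_x_right wm_const)
    then have pz: "pderiv z = 0" by simp
    have supp: "coeff z j = 0" if "\<not> p dvd j" for j
    proof (cases j)
      case 0 then show ?thesis using that by simp
    next
      case (Suc n)
      have "coeff (pderiv z) n = 0" using pz by simp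
      then have "of_nat (Suc n) * coeff z (Suc n) = 0" by (simp only: coeff_pderiv)
      moreover have "(of_nat (Suc n) :: 'a poly) \<noteq> 0"
        using that Suc assms(1) by (simp only: of_nat_poly_eq_0) simp
      ultimately show ?thesis using Suc by simp
    qed
    let ?y = "monom h 1 + monom (pderiv h) 0"
    have "?y \<in> Sset h" using A_h_yhat[of h] by (simp add: A_h_eq)
    from comm[OF this] have "weyl_mult z ?y = weyl_mult ?y z" .
    moreover have "weyl_mult z ?y = z * ?y"
      by (rule wm_eq_mult_R[OF assms(1,2)]) (use supp in auto)
    ultimately have D: "(\<Sum>j\<le>degree z. monom (h * pderiv (coeff z j)) j) = 0"
      unfolding wm_yhat_left by simp
    have der: "pderiv (coeff z n) = 0" for n
    proof (cases "n \<le> degree z")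
      case True
      have "coeff (\<Sum>j\<le>degree z. monom (h * pderiv (coeff z j)) j) n = 0" using D by simp
      then have "h * pderiv (coeff z n) = 0" using True by (simp only: coeff_sum_monoms) simp
      then show ?thesis using assms(3) by simp
    next
      case False then show ?thesis by (simp add: coeff_eq_0)
    qed
    show "z \<in> Sset h \<inter> Tp p" using zS der supp by (auto simp: Tp_def)
  qed
next
  show "Sset h \<inter> Tp p \<subseteq> weyl_center (A_h h)"
    using Tp_mult_eq[OF assms(1,2)] by (auto simp: weyl_center_def A_h_eq)
qed


lemma pderiv_pow_char:
  fixes f :: "'a::field poly"
  assumes "CHAR('a) = p" "p dvd n"
  shows "pderiv (f ^ n) = 0"
proof -
  have "(of_nat n :: 'a) = 0" using assms by (simp add: of_nat_eq_0_iff_char_dvd)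
  then show ?thesis by (simp add: pderiv_power)
qed

lemma deriv0_supp:
  fixes g :: "'a::field poly"
  assumes "CHAR('a) = p" "pderiv g = 0" "\<not> p dvd m"
  shows "coeff g m = 0"
proof (cases m)
  case 0 then show ?thesis using assms by simp
next
  case (Suc n)
  have "coeff (pderiv g) n = 0" using assms by simp
  then have "of_nat (Suc n) * coeff g (Suc n) = 0" by (simp only: coeff_pderiv)
  moreover have "(of_nat (Suc n) :: 'a) \<noteq> 0"
    using assms Suc by (simp only: of_nat_eq_0_iff_char_dvd) simp
  ultimately show ?thesis using Suc by simp
qed

lemma T_mult:
  fixes a b :: "'a::field poly poly"
  assumes "CHAR('a) = p" "p > 0" "a \<in> Sset h \<inter> Tp p" "b \<in> Sset h \<inter> Tp p"
  shows "a * b \<in> Sset h \<inter> Tp p"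
proof -
  have aS: "h ^ i dvd coeff a i" and bS: "h ^ i dvd coeff b i"
    and ad: "pderiv (coeff a i) = 0" and bd: "pderiv (coeff b i) = 0"
    and as: "\<not> p dvd i \<Longrightarrow> coeff a i = 0" and bs: "\<not> p dvd i \<Longrightarrow> coeff b i = 0" for i
    using assms(3,4) by (auto simp: Sset_def Tp_def)
  have "h ^ n dvd coeff (a * b) n" for n
    unfolding coeff_mult
  proof (rule dvd_sum)
    fix i assume "i \<in> {..n}"
    then have "h ^ n = h ^ i * h ^ (n - i)" by (simp add: power_add[symmetric])
    then show "h ^ n dvd coeff a i * coeff b (n - i)" using aS bS by (simp add: mult_dvd_mono)
  qed
  moreover have "pderiv (coeff (a * b) n) = 0" for n
    unfolding coeff_mult pderiv_sum' by (simp add: pderiv_mult ad bd)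
  moreover have "coeff (a * b) n = 0" if "\<not> p dvd n" for n
    unfolding coeff_mult
  proof (rule sum.neutral, rule ballI)
    fix i assume "i \<in> {..n}"
    then have "n = i + (n - i)" by simp
    then have "\<not> p dvd i \<or> \<not> p dvd (n - i)" using that by (metis dvd_add)
    then show "coeff a i * coeff b (n - i) = 0" using as bs by auto
  qed
  ultimately show ?thesis by (auto simp: Sset_def Tp_def)
qed

lemma T_0: "0 \<in> Sset h \<inter> Tp p"
  by (simp add: Sset_def Tp_def)

lemma T_add: "a \<in> Sset h \<inter> Tp p \<Longrightarrow> b \<in> Sset h \<inter> Tp p \<Longrightarrow> a + b \<in> Sset h \<inter> Tp p"
  by (auto simp: Sset_def Tp_def pderiv_add)

lemma T_sum: "(\<And>x. x \<in> A \<Longrightarrow> f x \<in> Sset h \<inter> Tp p) \<Longrightarrow> (\<Sum>x\<in>A. f x) \<in> Sset h \<inter> Tp p"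
  by (induction A rule: infinite_finite_induct) (simp_all add: T_0 T_add del: Int_iff)

lemma weyl_pow_const: "weyl_pow [:f:] n = [:f ^ n:]"
  unfolding weyl_pow_def by (induction n) (simp_all add: wm_const one_pCons)

lemma weyl_pow_y: "weyl_pow (weyl_y :: 'a::field poly poly) n = monom 1 n"
proof (induction n)
  case 0 then show ?case by (simp add: weyl_pow_def monom_0 one_pCons)
next
  case (Suc n)
  have "weyl_pow (weyl_y :: 'a::field poly poly) (Suc n) = weyl_mult weyl_y (weyl_pow weyl_y n)"
    by (simp add: weyl_pow_def)
  also have "\<dots> = weyl_mult (monom 1 1) (monom 1 n)"
    unfolding Suc.IH by (simp add: weyl_y_def)
  also have "\<dots> = monom 1 (Suc n)" by (simp add: wm_monom atMost_Suc)
  finally show ?case .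
qed

lemma weyl_pow_in: "a \<in> weyl_subalg S \<Longrightarrow> weyl_pow a n \<in> weyl_subalg S"
  unfolding weyl_pow_def
  by (induction n) (auto intro: weyl_subalg.mult weyl_subalg.scalar[of 1, simplified one_pCons[symmetric]])


lemma G_eq: "{weyl_pow weyl_x p, weyl_mult (weyl_const (h ^ p)) (weyl_pow weyl_y p)}
   = {[:[:0,1::'a::field:] ^ p:], monom (h ^ p) p}"
  by (simp add: weyl_x_def weyl_pow_const weyl_pow_y weyl_const_def wm_const smult_monom)

lemma C_sub_T:
  fixes h :: "'a::field poly"
  assumes "CHAR('a) = p" "p > 0"
  shows "weyl_subalg {[:[:0,1::'a:] ^ p:], monom (h ^ p) p} \<subseteq> Sset h \<inter> Tp p"
proof
  fix a assume "a \<in> weyl_subalg {[:[:0,1::'a:] ^ p:], monom (h ^ p) p}"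
  then show "a \<in> Sset h \<inter> Tp p"
  proof (induction rule: weyl_subalg.induct)
    case (scalar c) then show ?case by (auto simp: Sset_def Tp_def coeff_pCons split: nat.splits)
  next
    case (gen s)
    have d1: "pderiv ([:0,1::'a:] ^ p) = 0" by (rule pderiv_pow_char[OF assms(1)]) simp
    have d2: "pderiv (h ^ p) = 0" by (rule pderiv_pow_char[OF assms(1)]) simp
    from gen show ?case
      by (auto simp: Sset_def Tp_def coeff_pCons d1 d2 split: nat.splits intro: Nat.gr0I)
  next
    case (add a b) then show ?case using T_add[OF add(3) add(4)] by simp
  next
    case (mult a b)
    then have "weyl_mult a b = a * b" using Tp_mult_eq[OF assms] by blast
    then show ?case using T_mult[OF assms mult(3) mult(4)] by simp
  qed
qed


lemma T_sub_C:
  fixes h :: "'a::field poly"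
  assumes "CHAR('a) = p" "p > 0" "h \<noteq> 0"
  shows "Sset h \<inter> Tp p \<subseteq> weyl_subalg {[:[:0,1::'a:] ^ p:], monom (h ^ p) p}"
proof -
  let ?C = "weyl_subalg {[:[:0,1::'a:] ^ p:], monom (h ^ p) p}"
  have G1: "[:[:0,1::'a:] ^ p:] \<in> ?C" by (rule weyl_subalg.gen) simp
  have G2: "monom (h ^ p) p \<in> ?C" by (rule weyl_subalg.gen) simp
  have one: "1 \<in> ?C" using weyl_subalg.scalar[of 1] by (simp add: one_pCons)
  have a: "monom (h ^ (p * q)) (p * q) \<in> ?C" for q
  proof (induction q)
    case 0 then show ?case using one by (simp add: monom_0 one_pCons)
  next
    case (Suc q)
    have "monom (h ^ (p * Suc q)) (p * Suc q) = monom (h ^ p) p * monom (h ^ (p * q)) (p * q)"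
      by (simp add: mult_monom power_add)
    also have "\<dots> = weyl_mult (monom (h ^ p) p) (monom (h ^ (p * q)) (p * q))"
      by (rule wm_eq_mult_R[OF assms(1,2), symmetric]) (auto simp: coeff_monom)
    also have "\<dots> \<in> ?C" using G2 Suc.IH by (rule weyl_subalg.mult)
    finally show ?case .
  qed
  have b: "[:[:0,1::'a:] ^ (p * r):] \<in> ?C" for r
    using weyl_pow_in[OF G1, of r] by (simp add: weyl_pow_const power_mult)
  have c: "[:monom c (p * r):] \<in> ?C" for c r
  proof -
    have "[:monom c (p * r):] = weyl_mult [:[:c:]:] [:[:0,1::'a:] ^ (p * r):]"
      by (simp add: wm_const monom_altdef)
    also have "\<dots> \<in> ?C" using weyl_subalg.scalar b by (rule weyl_subalg.mult)
    finally show ?thesis .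
  qed
  have d: "[:g:] \<in> ?C" if g: "pderiv g = 0" for g
  proof -
    have "[:g:] = (\<Sum>m\<le>degree g. [:monom (coeff g m) m:])"
      by (simp add: monom_0[symmetric] monom_sum[symmetric] poly_as_sum_of_monoms)
    also have "\<dots> \<in> ?C"
    proof (rule subalg_sum)
      fix m
      show "[:monom (coeff g m) m:] \<in> ?C"
      proof (cases "p dvd m")
        case True then obtain r where "m = p * r" by (auto elim: dvdE)
        then show ?thesis using c by simp
      next
        case False
        then have "coeff g m = 0" by (rule deriv0_supp[OF assms(1) g])
        then show ?thesis using subalg_0 by simp
      qed
    qed
    finally show ?thesis .
  qed
  show ?thesis
  proof
    fix P assume P: "P \<in> Sset h \<inter> Tp p"
    have "(\<Sum>n\<le>degree P. monom (coeff P n) n) \<in> ?C"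
    proof (rule subalg_sum)
      fix n
      show "monom (coeff P n) n \<in> ?C"
      proof (cases "p dvd n")
        case False
        then have "coeff P n = 0" using P by (auto simp: Tp_def)
        then show ?thesis using subalg_0 by simp
      next
        case True then obtain q where n: "n = p * q" by (auto elim: dvdE)
        from P obtain g where g: "coeff P n = h ^ n * g" by (auto simp: Sset_def elim: dvdE)
        have "0 = pderiv (h ^ n * g)" using P unfolding g[symmetric] by (auto simp: Tp_def)
        also have "\<dots> = h ^ n * pderiv g" using pderiv_pow_char[OF assms(1) True, of h]
          by (simp add: pderiv_mult)
        finally have gd: "pderiv g = 0" using assms(3) by simp
        have "monom (coeff P n) n = weyl_mult [:g:] (monom (h ^ (p * q)) (p * q))"
          unfolding g by (simp add: n wm_const smult_monom mult.commute)
        also have "\<dots> \<in> ?C" using d[OF gd] a by (rule weyl_subalg.mult)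
        finally show ?thesis .
      qed
    qed
    then show "P \<in> ?C" by (simp add: poly_as_sum_of_monoms)
  qed
qed


lemma dvd_sub_eq:
  fixes p m r i :: nat
  assumes "p dvd (p * m + r - i)" "i \<le> p * m + r" "i < p" "r < p"
  shows "i = r"
proof (cases "i \<le> r")
  case True
  then have "p * m + r - i = p * m + (r - i)" by simp
  with assms(1) have "p dvd (r - i)" by (simp add: dvd_add_right_iff)
  moreover have "r - i < p" using assms(4) by simp
  ultimately have "r - i = 0" using dvd_imp_le by fastforce
  then show ?thesis using True by simp
next
  case False
  then have "m > 0" using assms(2) by (cases m) auto
  then have "p * m + r - i = p * (m - 1) + (p + r - i)"
    using False assms(3) by (cases m) (auto simp: algebra_simps)
  with assms(1) have "p dvd (p + r - i)" by (simp add: dvd_add_right_iff)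
  moreover have "0 < p + r - i" "p + r - i < p" using False assms(3) by auto
  ultimately show ?thesis using dvd_imp_le by fastforce
qed

lemma sep_coeff:
  fixes c :: "nat \<Rightarrow> 'b::comm_ring_1 poly" and d :: "nat \<Rightarrow> 'b"
  assumes "\<And>i k. i < p \<Longrightarrow> \<not> p dvd k \<Longrightarrow> coeff (c i) k = 0" "r < p"
  shows "coeff (\<Sum>i<p. c i * monom (d i) i) (p * m + r) = coeff (c r) (p * m) * d r"
proof -
  have e: "coeff (c i * monom (d i) i) n = (if n < i then 0 else d i * coeff (c i) (n - i))" for i n
    by (simp add: mult.commute[of "c i"] coeff_monom_mult)
  have "coeff (\<Sum>i<p. c i * monom (d i) i) (p * m + r)
      = (\<Sum>i<p. if p * m + r < i then 0 else d i * coeff (c i) (p * m + r - i))"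
    by (simp add: coeff_sum e)
  also have "\<dots> = (if p * m + r < r then 0 else d r * coeff (c r) (p * m + r - r))"
  proof (rule sum_only_one)
    fix i assume i: "i \<in> {..<p}" "i \<noteq> r"
    show "(if p * m + r < i then 0 else d i * coeff (c i) (p * m + r - i)) = 0"
    proof (cases "p * m + r < i")
      case False
      then have "\<not> p dvd (p * m + r - i)" using dvd_sub_eq[of p m r i] i assms(2) by auto
      then show ?thesis using assms(1) i by simp
    qed simp
  qed (use assms in auto)
  finally show ?thesis by simp
qed

lemma X_pow_eq_monom: "[:0, 1:] ^ i = monom 1 i"
  by (simp add: monom_altdef)

lemma uniq_decomp:
  fixes c :: "nat \<Rightarrow> 'a::field poly"
  assumes "CHAR('a) = p" "p > 0" "\<And>i. i < p \<Longrightarrow> pderiv (c i) = 0"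
    "(\<Sum>i<p. [:0,1:] ^ i * c i) = 0" "r < p"
  shows "c r = 0"
proof (rule poly_eqI)
  fix k
  show "coeff (c r) k = coeff 0 k"
  proof (cases "p dvd k")
    case True
    then obtain m where k: "k = p * m" by (auto elim: dvdE)
    have "coeff (\<Sum>i<p. c i * monom 1 i) (p * m + r) = coeff (c r) (p * m) * 1"
      by (rule sep_coeff) (use assms deriv0_supp in auto)
    moreover have "(\<Sum>i<p. c i * monom 1 i) = 0"
      using assms(4) by (simp add: X_pow_eq_monom mult.commute)
    ultimately show ?thesis using k by simp
  next
    case False then show ?thesis using deriv0_supp[OF assms(1) assms(3)[OF assms(5)]] by simp
  qed
qed

lemma exist_decomp:
  fixes g :: "'a::field poly"
  assumes "CHAR('a) = p" "p > 0"
  shows "\<exists>u. (\<forall>i. pderiv (u i) = 0) \<and> g = (\<Sum>i<p. [:0,1:] ^ i * u i)"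
proof (induction g rule: pCons_induct)
  case 0 then show ?case by (rule exI[of _ "\<lambda>_. 0"]) simp
next
  case (pCons a g)
  from pCons.IH obtain u where u: "\<forall>i. pderiv (u i) = 0" "g = (\<Sum>i<p. [:0,1:] ^ i * u i)" by blast
  obtain p' where p: "p = Suc p'" using assms(2) by (cases p) auto
  define v where "v i = (if i = 0 then [:a:] + [:0,1:] ^ p * u p' else u (i - 1))" for i
  have X: "pderiv ([:0,1::'a:] ^ p) = 0" by (rule pderiv_pow_char[OF assms(1)]) simp
  have "\<forall>i. pderiv (v i) = 0" using u(1) X by (simp add: v_def pderiv_add pderiv_mult pderiv_pCons)
  moreover have "pCons a g = (\<Sum>i<p. [:0,1:] ^ i * v i)"
  proof -
    have "(\<Sum>i<p. [:0,1:] ^ i * v i) = v 0 + (\<Sum>i<p'. [:0,1:] ^ Suc i * v (Suc i))"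
      unfolding p by (simp only: sum.lessThan_Suc_shift) simp
    also have "\<dots> = [:a:] + [:0,1:] ^ p * u p' + (\<Sum>i<p'. [:0,1:] ^ Suc i * u i)"
      by (simp add: v_def)
    also have "[:0,1:] * g = (\<Sum>i<p'. [:0,1:] ^ Suc i * u i) + [:0,1:] ^ p * u p'"
      unfolding u(2) p by (simp only: sum_distrib_left sum.lessThan_Suc mult.assoc power_Suc distrib_left)
    moreover have "pCons a g = [:a:] + [:0,1:] * g" by simp
    ultimately show ?thesis by (simp add: algebra_simps)
  qed
  ultimately show ?case by blast
qed


lemma T_monom:
  fixes h f :: "'a::field poly"
  assumes "CHAR('a) = p" "p dvd n" "pderiv f = 0"
  shows "monom (f * h ^ n) n \<in> Sset h \<inter> Tp p"
  using assms pderiv_pow_char[OF assms(1,2), of h]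
  by (auto simp: Sset_def Tp_def coeff_monom pderiv_mult)

definition Wset :: "nat \<Rightarrow> 'a::field poly \<Rightarrow> 'a poly poly set" where
  "Wset p h = {a. \<exists>z. (\<forall>i<p. \<forall>j<p. z i j \<in> Sset h \<inter> Tp p) \<and>
       a = (\<Sum>i<p. \<Sum>j<p. z i j * monom ([:0,1:] ^ i * h ^ j) j)}"

lemma W_0: "0 \<in> Wset p h"
  unfolding Wset_def by (rule CollectI, rule exI[of _ "\<lambda>_ _. 0"]) (simp add: T_0 del: Int_iff)

lemma W_add: "a \<in> Wset p h \<Longrightarrow> b \<in> Wset p h \<Longrightarrow> a + b \<in> Wset p h"
proof -
  assume "a \<in> Wset p h" "b \<in> Wset p h"
  then obtain z1 z2 where z1: "\<forall>i<p. \<forall>j<p. z1 i j \<in> Sset h \<inter> Tp p"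
      "a = (\<Sum>i<p. \<Sum>j<p. z1 i j * monom ([:0,1:] ^ i * h ^ j) j)"
    and z2: "\<forall>i<p. \<forall>j<p. z2 i j \<in> Sset h \<inter> Tp p"
      "b = (\<Sum>i<p. \<Sum>j<p. z2 i j * monom ([:0,1:] ^ i * h ^ j) j)"
    unfolding Wset_def by blast
  show "a + b \<in> Wset p h" unfolding Wset_def
  proof (rule CollectI, rule exI[of _ "\<lambda>i j. z1 i j + z2 i j"], rule conjI)
    show "\<forall>i<p. \<forall>j<p. z1 i j + z2 i j \<in> Sset h \<inter> Tp p" using z1(1) z2(1) T_add by blast
    show "a + b = (\<Sum>i<p. \<Sum>j<p. (z1 i j + z2 i j) * monom ([:0,1:] ^ i * h ^ j) j)"
      unfolding z1(2) z2(2) by (simp add: distrib_right sum.distrib)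
  qed
qed

lemma W_sum: "(\<And>x. x \<in> A \<Longrightarrow> f x \<in> Wset p h) \<Longrightarrow> (\<Sum>x\<in>A. f x) \<in> Wset p h"
  by (induction A rule: infinite_finite_induct) (simp_all add: W_0 W_add)

lemma W_monom:
  fixes h :: "'a::field poly"
  assumes "CHAR('a) = p" "p > 0" "h ^ n dvd c"
  shows "monom c n \<in> Wset p h"
proof -
  obtain g where g: "c = h ^ n * g" using assms(3) by (auto elim: dvdE)
  obtain u where u: "\<forall>i. pderiv (u i) = 0" "g = (\<Sum>i<p. [:0,1:] ^ i * u i)"
    using exist_decomp[OF assms(1,2)] by blast
  define q r where "q = n div p" and "r = n mod p"
  have n: "n = p * q + r" unfolding q_def r_def by simp
  have r: "r < p" unfolding r_def using assms(2) by simp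
  define z where "z i j = (if j = r then monom (u i * h ^ (p * q)) (p * q) else 0)" for i j
  show ?thesis unfolding Wset_def
  proof (rule CollectI, rule exI[of _ z], rule conjI)
    show "\<forall>i<p. \<forall>j<p. z i j \<in> Sset h \<inter> Tp p"
      using T_monom[OF assms(1) _ u(1)[rule_format]] by (auto simp: z_def Sset_0 Tp_def)
    have "(\<Sum>i<p. \<Sum>j<p. z i j * monom ([:0,1:] ^ i * h ^ j) j)
        = (\<Sum>i<p. z i r * monom ([:0,1:] ^ i * h ^ r) r)"
    proof (rule sum.cong[OF refl])
      fix i assume "i \<in> {..<p}"
      show "(\<Sum>j<p. z i j * monom ([:0,1:] ^ i * h ^ j) j) = z i r * monom ([:0,1:] ^ i * h ^ r) r"
        by (rule sum_only_one) (use r in \<open>auto simp: z_def\<close>)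
    qed
    also have "\<dots> = (\<Sum>i<p. monom (([:0,1:] ^ i * u i) * h ^ n) n)"
      by (simp add: z_def mult_monom n power_add algebra_simps)
    also have "\<dots> = monom c n"
    proof -
      have "(\<Sum>i<p. ([:0,1:] ^ i * u i) * h ^ n) = g * h ^ n"
        unfolding u(2) by (simp add: sum_distrib_right)
      then show ?thesis by (simp add: monom_sum[symmetric] g mult.commute)
    qed
    finally show "monom c n = (\<Sum>i<p. \<Sum>j<p. z i j * monom ([:0,1:] ^ i * h ^ j) j)" ..
  qed
qed

lemma spanning:
  fixes h :: "'a::field poly"
  assumes "CHAR('a) = p" "p > 0" "a \<in> Sset h"
  shows "a \<in> Wset p h"
proof -
  have "(\<Sum>n\<le>degree a. monom (coeff a n) n) \<in> Wset p h"
    by (rule W_sum, rule W_monom[OF assms(1,2)]) (use assms(3) in \<open>simp add: Sset_def\<close>)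
  then show ?thesis by (simp add: poly_as_sum_of_monoms)
qed


lemma independence:
  fixes h :: "'a::field poly"
  assumes "CHAR('a) = p" "p > 0" "h \<noteq> 0"
    "\<forall>i<p. \<forall>j<p. z i j \<in> Sset h \<inter> Tp p"
    "(\<Sum>i<p. \<Sum>j<p. z i j * monom ([:0,1:] ^ i * h ^ j) j) = 0"
  shows "\<forall>i<p. \<forall>j<p. z i j = 0"
proof (intro allI impI)
  fix i0 r assume i0: "i0 < p" and r: "r < p"
  have zd: "pderiv (coeff (z i j) k) = 0" and zs: "\<not> p dvd k \<Longrightarrow> coeff (z i j) k = 0"
    if "i < p" "j < p" for i j k
    using assms(4) that by (auto simp: Tp_def)
  define Z where "Z j = (\<Sum>i<p. smult ([:0,1:] ^ i) (z i j))" for j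
  have "(\<Sum>i<p. \<Sum>j<p. z i j * monom ([:0,1:] ^ i * h ^ j) j)
      = (\<Sum>i<p. \<Sum>j<p. smult ([:0,1:] ^ i) (z i j) * monom (h ^ j) j)"
    by (simp add: smult_monom[symmetric] mult_smult_right mult_smult_left)
  also have "\<dots> = (\<Sum>j<p. Z j * monom (h ^ j) j)"
    unfolding Z_def by (subst sum.swap) (simp add: sum_distrib_right)
  finally have Z0: "(\<Sum>j<p. Z j * monom (h ^ j) j) = 0" using assms(5) by simp
  have Zs: "coeff (Z j) k = 0" if "j < p" "\<not> p dvd k" for j k
    using zs that by (simp add: Z_def coeff_sum)
  have "coeff (z i0 r) k = 0" for k
  proof (cases "p dvd k")
    case True
    then obtain m where k: "k = p * m" by (auto elim: dvdE)
    have "coeff (\<Sum>j<p. Z j * monom (h ^ j) j) (p * m + r) = coeff (Z r) (p * m) * h ^ r"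
      by (rule sep_coeff) (use Zs r in auto)
    then have "coeff (Z r) (p * m) * h ^ r = 0" using Z0 by simp
    then have "coeff (Z r) (p * m) = 0" using assms(3) by simp
    then have "(\<Sum>i<p. [:0,1:] ^ i * coeff (z i r) (p * m)) = 0"
      by (simp add: Z_def coeff_sum)
    then have "coeff (z i0 r) (p * m) = 0"
      using uniq_decomp[OF assms(1,2), where c="\<lambda>i. coeff (z i r) (p * m)" and r=i0] zd r i0
      by auto
    then show ?thesis using k by simp
  next
    case False then show ?thesis using zs i0 r by simp
  qed
  then show "z i0 r = 0" by (simp add: poly_eq_iff)
qed

theorem proposition5p5:
  fixes h :: "'a::field poly" and p :: nat
  assumes "CHAR('a) = p" and "p > 0" and "h \<noteq> 0"
  defines "b \<equiv> (\<lambda>i j. weyl_mult (weyl_mult (weyl_pow weyl_x i) (weyl_const (h ^ j)))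
                                 (weyl_pow weyl_y j))"
  shows "weyl_center (A_h h) =
           weyl_subalg {weyl_pow weyl_x p,
                        weyl_mult (weyl_const (h ^ p)) (weyl_pow weyl_y p)} \<and>
         (\<forall>i<p. \<forall>j<p. b i j \<in> A_h h) \<and>
         (\<forall>a\<in>A_h h. \<exists>z. (\<forall>i<p. \<forall>j<p. z i j \<in> weyl_center (A_h h)) \<and>
                      a = (\<Sum>i<p. \<Sum>j<p. weyl_mult (z i j) (b i j))) \<and>
         (\<forall>z. (\<forall>i<p. \<forall>j<p. z i j \<in> weyl_center (A_h h)) \<longrightarrow>
             (\<Sum>i<p. \<Sum>j<p. weyl_mult (z i j) (b i j)) = 0 \<longrightarrow>
             (\<forall>i<p. \<forall>j<p. z i j = 0))"
proof -
  have Z: "weyl_center (A_h h) = Sset h \<inter> Tp p" by (rule center_eq[OF assms(1,2,3)])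
  have C: "weyl_subalg {weyl_pow weyl_x p, weyl_mult (weyl_const (h ^ p)) (weyl_pow weyl_y p)}
      = Sset h \<inter> Tp p"
    unfolding G_eq using C_sub_T[OF assms(1,2), of h] T_sub_C[OF assms(1,2,3)] by blast
  have beq: "b i j = monom ([:0,1:] ^ i * h ^ j) j" for i j
    unfolding b_def weyl_x_def by (simp add: weyl_pow_const weyl_const_def wm_const weyl_pow_y smult_monom)
  have wmb: "weyl_mult (z i j) (b i j) = z i j * monom ([:0,1:] ^ i * h ^ j) j"
    if "z i j \<in> Sset h \<inter> Tp p" for z i j
    using Tp_mult_eq(1)[OF assms(1,2)] that beq by auto
  show ?thesis
  proof (intro conjI)
    show "weyl_center (A_h h) = weyl_subalg {weyl_pow weyl_x p,
                        weyl_mult (weyl_const (h ^ p)) (weyl_pow weyl_y p)}"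
      using Z C by simp
    show "\<forall>i<p. \<forall>j<p. b i j \<in> A_h h"
      by (simp add: A_h_eq beq Sset_monom)
    show "\<forall>a\<in>A_h h. \<exists>z. (\<forall>i<p. \<forall>j<p. z i j \<in> weyl_center (A_h h)) \<and>
                      a = (\<Sum>i<p. \<Sum>j<p. weyl_mult (z i j) (b i j))"
    proof
      fix a assume "a \<in> A_h h"
      then have "a \<in> Wset p h" using spanning[OF assms(1,2)] by (simp add: A_h_eq)
      then obtain z where z: "\<forall>i<p. \<forall>j<p. z i j \<in> Sset h \<inter> Tp p"
        "a = (\<Sum>i<p. \<Sum>j<p. z i j * monom ([:0,1:] ^ i * h ^ j) j)"
        unfolding Wset_def by blast
      have "(\<Sum>i<p. \<Sum>j<p. weyl_mult (z i j) (b i j)) = (\<Sum>i<p. \<Sum>j<p. z i j * monom ([:0,1:] ^ i * h ^ j) j)"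
        using z(1) wmb by (intro sum.cong refl) auto
      then show "\<exists>z. (\<forall>i<p. \<forall>j<p. z i j \<in> weyl_center (A_h h)) \<and>
                      a = (\<Sum>i<p. \<Sum>j<p. weyl_mult (z i j) (b i j))"
      proof (intro exI conjI)
        show "\<forall>i<p. \<forall>j<p. z i j \<in> weyl_center (A_h h)" using z(1) Z by simp
      qed (use z(2) \<open>(\<Sum>i<p. \<Sum>j<p. weyl_mult (z i j) (b i j)) = _\<close> in simp)
    qed
    show "\<forall>z. (\<forall>i<p. \<forall>j<p. z i j \<in> weyl_center (A_h h)) \<longrightarrow>
             (\<Sum>i<p. \<Sum>j<p. weyl_mult (z i j) (b i j)) = 0 \<longrightarrow>
             (\<forall>i<p. \<forall>j<p. z i j = 0)"
    proof (rule allI, rule impI, rule impI)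
      fix z assume z: "\<forall>i<p. \<forall>j<p. z i j \<in> weyl_center (A_h h)"
        and s: "(\<Sum>i<p. \<Sum>j<p. weyl_mult (z i j) (b i j)) = 0"
      have zT: "\<forall>i<p. \<forall>j<p. z i j \<in> Sset h \<inter> Tp p" using z Z by simp
      have "(\<Sum>i<p. \<Sum>j<p. weyl_mult (z i j) (b i j)) = (\<Sum>i<p. \<Sum>j<p. z i j * monom ([:0,1:] ^ i * h ^ j) j)"
        using zT wmb by (intro sum.cong refl) auto
      with s have "(\<Sum>i<p. \<Sum>j<p. z i j * monom ([:0,1:] ^ i * h ^ j) j) = 0" by simp
      then show "\<forall>i<p. \<forall>j<p. z i j = 0" by (rule independence[OF assms(1,2,3) zT])
    qed
  qed
qed

end
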